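(* Let $0<\delta<\rho$, with $\rho=3-2\sqrt2$, and let $\ell(z)=C_1(z-\rho)^{-4}+C_2(z-\rho)^{-4}\log\frac{1}{1-z/\rho}$ with $C_1,C_2$ as described in the context. Then for all $n\in\mathbb{N}$, \[\frac{1}{2\pi i}\int_{|z|=\delta}\frac{\ell(z)}{z^{n+1}}\,dz\ \ge\ \rho^{-n}n^3\,(8.07\,\log n+1.37),\] where the right-hand side is interpreted as $0$ when $n=0$.
   Context: Let $(d_n)_{n\ge0}$ be the rational sequence with $(d_0,\dots,d_6)=(72,1932,31248,\frac{790101}{2},\frac{17208645}{4},\frac{338898609}{8},\frac{1551478257}{4})$ satisfying $\sum_{k=0}^7 r_k(n)d_{n+k}=0$ for all $n\ge0$, where $r_0(n) = -(n+8)(n+7)(n+6)^2(12232n^3+298144n^2+2412586n+6469077)$, $r_1(n) = (n+8)(183480n^6+7655560n^5+131977142n^4+1202876299n^3+6112196895n^2+16418149668n+18219511026)$, $r_2(n) = -(n+8)(941864n^6+38326904n^5+644300514n^4+5727711699n^3+28407144241n^2+74557779538n+80949464718)$, $r_3(n) = 1993816n^7+97303624n^6+2021855198n^5+23184921987n^4+158457515673n^3+645518710454n^2+1451619424860n+1390493835900$, $r_4(n) = -1993816n^7-98090344n^6-2054897438n^5-23758375953n^4-163720428321n^3-672459054524n^2-1524577250976n-1472211879228$, $r_5(n) = (n+6)(941864n^6+40789672n^5+730497394n^4+6921881565n^3+36590122947n^2+102300885158n+118218544398)$, $r_6(n) = (n+6)(183480n^6+7756760n^5+135519142n^4+1252328453n^3+6456460129n^2+17612930492n+19872693550)$,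 $r_7(n) = (n+7)(n+6)(n+8)^2(12232n^3+215600n^2+1256970n+2435511)$. Let $f(z)=\sum_{n\ge0}d_nz^n$ and $\rho=3-2\sqrt2$. The series $f$ converges for $|z|<\rho$ and extends analytically to $\Delta=\{z:|z|<1\}\setminus[\rho,1]$. Here $\log$ denotes the principal branch ($\log(re^{i\theta})=\log r+i\theta$, $-\pi<\theta\le\pi$). On $\Delta\cap\{|z-\rho|<\rho\}$, $f$ has the (unique) decomposition \[f(z)=C_1(z-\rho)^{-4}+C_2(z-\rho)^{-4}L(z)+(z-\rho)^{-3}\bigl(h_0(z)+h_1(z)L(z)+h_2(z)L(z)^2\bigr),\quad L(z)=\log\tfrac{1}{1-z/\rho},\] with real constants $C_1,C_2$ and functions $h_0,h_1,h_2$ analytic on the disk $|z-\rho|<\rho$; numerically $C_1\in[0.0598-4.79\cdot10^{-5},\,0.0598+4.79\cdot10^{-5}]$ and $C_2\in[0.0420-3.14\cdot10^{-5},\,0.0420+3.14\cdot10^{-5}]$. *)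

theory Defs
  imports "HOL-Complex_Analysis.Complex_Analysis"
begin

definition rho :: real where "rho = 3 - 2 * sqrt 2"

definition rcoef :: "nat \<Rightarrow> nat \<Rightarrow> real" where
  "rcoef k m = (let n = real m in
    if k = 0 then -(n+8)*(n+7)*(n+6)^2*(12232*n^3+298144*n^2+2412586*n+6469077)
    else if k = 1 then (n+8)*(183480*n^6+7655560*n^5+131977142*n^4+1202876299*n^3+6112196895*n^2+16418149668*n+18219511026)
    else if k = 2 then -(n+8)*(941864*n^6+38326904*n^5+644300514*n^4+5727711699*n^3+28407144241*n^2+74557779538*n+80949464718)
    else if k = 3 then 1993816*n^7+97303624*n^6+2021855198*n^5+23184921987*n^4+158457515673*n^3+645518710454*n^2+1451619424860*n+1390493835900
    else if k = 4 then -1993816*n^7-98090344*n^6-2054897438*n^5-23758375953*n^4-163720428321*n^3-672459054524*n^2-1524577250976*n-1472211879228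
    else if k = 5 then (n+6)*(941864*n^6+40789672*n^5+730497394*n^4+6921881565*n^3+36590122947*n^2+102300885158*n+118218544398)
    else if k = 6 then (n+6)*(183480*n^6+7756760*n^5+135519142*n^4+1252328453*n^3+6456460129*n^2+17612930492*n+19872693550)
    else (n+7)*(n+6)*(n+8)^2*(12232*n^3+215600*n^2+1256970*n+2435511))"

definition Delta :: "complex set" where
  "Delta = ball 0 1 - {complex_of_real x | x. rho \<le> x \<and> x \<le> 1}"

definition ell :: "real \<Rightarrow> real \<Rightarrow> complex \<Rightarrow> complex" where
  "ell C1 C2 z = of_real C1 / (z - of_real rho) ^ 4
     + of_real C2 / (z - of_real rho) ^ 4 * Ln (1 / (1 - z / of_real rho))"

end

theory Submission
  imports Defs "HOL-Analysis.FPS_Convergence"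
begin


definition aa :: "nat \<Rightarrow> real" where "aa n = real ((n+1)*(n+2)*(n+3)) / 6"
definition hh :: "nat \<Rightarrow> real" where "hh n = harm (n+3) - 11/6"
definition Ef :: "complex \<Rightarrow> complex fps" where "Ef c = inverse ((fps_X - fps_const c)^4)"
definition Lf :: "complex \<Rightarrow> complex fps" where
  "Lf c = Abs_fps (\<lambda>n. if n = 0 then 0 else 1/(of_nat n * c^n))"

lemma E_ode:
  assumes c: "c \<noteq> 0"
  shows "(fps_X - fps_const c) * fps_deriv (Ef c) + fps_const 4 * Ef c = 0"
proof -
  define Q1 where "Q1 = fps_X - fps_const c"
  have q0: "(Q1^4) $ 0 \<noteq> 0" using c by (simp add: Q1_def fps_nth_power_0)
  have inv: "Ef c * Q1^4 = 1" unfolding Ef_def Q1_def[symmetric] using q0 by (rule inverse_mult_eq_1)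
  have h1: "fps_deriv (Ef c * Q1^4) = 0" by (simp add: inv)
  have dQ: "fps_deriv Q1 = 1" by (simp add: Q1_def)
  have "fps_deriv (Ef c * Q1^4) = fps_deriv (Ef c) * Q1^4 + Ef c * (of_nat 4 * Q1^3 * fps_deriv Q1)"
    by (simp only: fps_deriv_mult fps_deriv_power) simp
  also have "\<dots> = (Q1 * fps_deriv (Ef c) + 4 * Ef c) * Q1^3"
    unfolding dQ by (simp add: algebra_simps eval_nat_numeral)
  finally have eqn: "fps_deriv (Ef c * Q1^4) = (Q1 * fps_deriv (Ef c) + 4 * Ef c) * Q1^3" .
  have "(Q1 * fps_deriv (Ef c) + 4 * Ef c) * Q1^3 = 0" by (metis h1 eqn)
  moreover have "Q1^3 \<noteq> 0"
  proof
    assume "Q1^3 = 0" then have "(Q1^3) $ 0 = 0" by simp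
    then show False using c by (simp add: Q1_def fps_nth_power_0)
  qed
  ultimately have "Q1 * fps_deriv (Ef c) + 4 * Ef c = 0" by simp
  then show ?thesis unfolding Q1_def by (simp add: fps_numeral_fps_const)
qed
lemma E_rec:
  assumes c: "c \<noteq> 0"
  shows "Ef c $ Suc n = (of_nat n + 4) * Ef c $ n / (c * (of_nat n + 1))"
proof -
  have "((fps_X - fps_const c) * fps_deriv (Ef c) + fps_const 4 * Ef c) $ n = 0"
    using E_ode[OF c] by simp
  then have "of_nat n * Ef c $ n - c * (of_nat n + 1) * Ef c $ Suc n + 4 * Ef c $ n = 0"
    by (cases n) (auto simp: algebra_simps fps_mult_nth_0 )
  then have "Ef c $ Suc n * (c * of_nat (Suc n)) = (of_nat n + 4) * Ef c $ n"
    by (simp add: algebra_simps)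
  moreover have nz: "complex_of_nat n + 1 \<noteq> 0" by (metis of_nat_Suc of_nat_neq_0 add.commute)
  ultimately show ?thesis using c by (simp add: eq_divide_eq add.commute)
qed

lemma E_nth:
  assumes c: "c \<noteq> 0"
  shows "Ef c $ n = of_real (aa n) / c^(n+4)"
proof (induction n)
  case 0
  then show ?case using c by (simp add: Ef_def aa_def fps_nth_power_0 field_simps)
next
  case (Suc n)
  have a: "aa (Suc n) = (real n + 4) * aa n / (real n + 1)"
    by (simp add: aa_def field_simps)
  have "Ef c $ Suc n = (of_nat n + 4) * (of_real (aa n) / c^(n+4)) / (c * (of_nat n + 1))"
    unfolding E_rec[OF c] Suc ..
  also have "\<dots> = of_real ((real n + 4) * aa n / (real n + 1)) / (c * c^(n + 4))"
    using c by (simp add: field_simps)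
  also have "c * c^(n + 4) = c^(Suc n + 4)" by (simp only: power_Suc add_Suc)
  finally show ?case unfolding a .
qed

lemma L_ode:
  assumes c: "c \<noteq> 0"
  shows "(fps_X - fps_const c) * fps_deriv (Lf c) = -1"
proof (rule fps_ext)
  fix n
  have d: "fps_deriv (Lf c) $ m = 1 / c^(m+1)" for m
  proof -
    have nz: "complex_of_nat (m+1) \<noteq> 0" by (metis Suc_eq_plus1 of_nat_neq_0)
    have "fps_deriv (Lf c) $ m = of_nat (m+1) * (1 / (of_nat (m+1) * c^(m+1)))"
      by (simp add: Lf_def)
    also have "\<dots> = 1 / c^(m+1)" using nz c by (simp del: of_nat_add)
    finally show ?thesis .
  qed
  show "((fps_X - fps_const c) * fps_deriv (Lf c)) $ n = (-1 :: complex fps) $ n"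
    using c by (cases n) (simp_all add: algebra_simps d del: fps_deriv_nth)
qed

lemma G_ode:
  assumes c: "c \<noteq> 0"
  shows "(fps_X - fps_const c) * fps_deriv (Ef c * Lf c) + fps_const 4 * (Ef c * Lf c) + Ef c = 0"
proof -
  have "(fps_X - fps_const c) * fps_deriv (Ef c * Lf c)
     = ((fps_X - fps_const c) * fps_deriv (Ef c)) * Lf c + Ef c * ((fps_X - fps_const c) * fps_deriv (Lf c))"
    by (simp add: algebra_simps)
  also have "\<dots> = - (fps_const 4 * Ef c) * Lf c - Ef c"
    using E_ode[OF c] L_ode[OF c] by (simp add: eq_neg_iff_add_eq_0[symmetric] add_eq_0_iff2)
  finally show ?thesis by (simp add: algebra_simps)
qed

lemma G_rec:
  assumes c: "c \<noteq> 0"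
  shows "(Ef c * Lf c) $ Suc n = ((of_nat n + 4) * (Ef c * Lf c) $ n + Ef c $ n) / (c * (of_nat n + 1))"
proof -
  define G where "G = Ef c * Lf c"
  have "((fps_X - fps_const c) * fps_deriv G + fps_const 4 * G + Ef c) $ n = 0"
    using G_ode[OF c] unfolding G_def[symmetric] by simp
  then have "of_nat n * G $ n - c * (of_nat n + 1) * G $ Suc n + 4 * G $ n + Ef c $ n = 0"
    by (cases n) (auto simp: algebra_simps)
  then have "G $ Suc n * (c * (of_nat n + 1)) = (of_nat n + 4) * G $ n + Ef c $ n"
    by (simp add: algebra_simps)
  moreover have nz: "complex_of_nat n + 1 \<noteq> 0" by (metis of_nat_Suc of_nat_neq_0 add.commute)
  ultimately show ?thesis using c unfolding G_def by (simp add: eq_divide_eq)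
qed

lemma hh_Suc: "hh (Suc n) = hh n + 1 / (real n + 4)"
proof -
  have "harm (Suc n + 3) = harm (Suc (n+3)) " by simp
  then show ?thesis unfolding hh_def harm_Suc by (simp add: inverse_eq_divide add.commute)
qed

lemma G_nth:
  assumes c: "c \<noteq> 0"
  shows "(Ef c * Lf c) $ n = of_real (aa n * hh n) / c^(n+4)"
proof (induction n)
  case 0
  then show ?case by (simp add: Lf_def hh_def harm_expand)
next
  case (Suc n)
  have a: "aa (Suc n) * hh (Suc n) = ((real n + 4) * (aa n * hh n) + aa n) / (real n + 1)"
    unfolding hh_Suc by (simp add: aa_def field_simps)
  have "(Ef c * Lf c) $ Suc n = ((of_nat n + 4) * (of_real (aa n * hh n) / c^(n+4)) + of_real (aa n) / c^(n+4)) / (c * (of_nat n + 1))"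
    unfolding G_rec[OF c] Suc E_nth[OF c] ..
  also have "\<dots> = of_real (((real n + 4) * (aa n * hh n) + aa n) / (real n + 1)) / (c * c^(n + 4))"
    using c by (simp add: field_simps)
  also have "c * c^(n + 4) = c^(Suc n + 4)" by (simp only: power_Suc add_Suc)
  finally show ?case unfolding a .
qed



lemma rho_pos: "rho > 0"
proof -
  have "sqrt 2 < 3/2" by (rule real_less_lsqrt) (auto simp: power2_eq_square)
  then show ?thesis unfolding rho_def by simp
qed

lemma Re_pos_aux:
  assumes "norm u < rho"
  shows "Re (1 - u / of_real rho) > 0"
proof -
  have "norm (u / of_real rho) < 1" using assms rho_pos by (simp add: norm_divide)
  then have "Re (u / of_real rho) < 1" using complex_Re_le_cmod[of "u / of_real rho"] by linarith
  then show ?thesis by simp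
qed

lemma Re_pos_aux2:
  assumes "norm u < rho"
  shows "Re (1 / (1 - u / of_real rho)) > 0"
  using Re_pos_aux[OF assms] by (simp add: Re_complex_div_gt_0)

lemma not_nonpos_aux:
  fixes u :: complex
  assumes "norm u < rho"
  shows "1 / (1 - u / of_real rho) \<notin> \<real>\<^sub>\<le>\<^sub>0" "1 - u / of_real rho \<notin> \<real>\<^sub>\<le>\<^sub>0"
  using Re_pos_aux2[OF assms] Re_pos_aux[OF assms] by (auto simp: complex_nonpos_Reals_iff)

lemma has_fps_expansion_power_aux:
  fixes F :: "complex fps"
  assumes "f has_fps_expansion F"
  shows "(\<lambda>z. f z ^ k) has_fps_expansion F ^ k"
proof (induction k)
  case 0 then show ?case by simp
next
  case (Suc k)
  have "(\<lambda>z. f z * f z ^ k) has_fps_expansion F * F ^ k"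
    by (intro has_fps_expansion_mult assms Suc)
  then show ?case by simp
qed

lemma L_expansion:
  "(\<lambda>z. Ln (1 / (1 - z / of_real rho))) has_fps_expansion Lf (of_real rho)"
proof (rule has_fps_expansionI)
  have "eventually (\<lambda>u. u \<in> ball 0 rho) (nhds (0::complex))"
    using rho_pos by (intro eventually_nhds_in_open) auto
  then show "eventually (\<lambda>u. (\<lambda>n. Lf (of_real rho) $ n * u ^ n) sums Ln (1 / (1 - u / of_real rho))) (nhds 0)"
  proof eventually_elim
    case (elim u)
    define w where "w = u / of_real rho"
    have nu: "norm u < rho" using elim by simp
    have "norm w < 1" using nu rho_pos by (simp add: w_def norm_divide)
    then have "norm (-w) < 1" by simp
    from sums_minus[OF Ln_series[OF this]]
    have "(\<lambda>n. - ((-1)^Suc n / of_nat n * (-w)^n)) sums - Ln (1 + - w)" .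
    moreover have "(\<lambda>n. - ((-1)^Suc n / of_nat n * (-w)^n)) = (\<lambda>n. Lf (of_real rho) $ n * u ^ n)"
    proof
      fix n
      have m1: "(-1::complex)^n * (-1)^n = 1"
        by (simp flip: power_mult_distrib)
      have "(-1::complex)^Suc n * (-w)^n = - (((-1)^n * (-1)^n) * w^n)"
        by (subst power_minus[of w]) (simp only: power_Suc mult_minus_left mult_1 mult.assoc)
      also have "\<dots> = - (w^n)" by (simp only: m1 mult_1)
      finally have "(-1::complex)^Suc n * (-w)^n = - (w^n)" .
      then have "- ((-1)^Suc n / of_nat n * (-w)^n) = w^n / of_nat n"
        by (simp add: field_simps)
      also have "\<dots> = Lf (of_real rho) $ n * u ^ n"
        using rho_pos by (simp add: Lf_def w_def power_divide)
      finally show "- ((-1)^Suc n / of_nat n * (-w)^n) = Lf (of_real rho) $ n * u ^ n" .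
    qed
    moreover have "- Ln (1 + - w) = Ln (1 / (1 - u / of_real rho))"
      using Ln_inverse[OF not_nonpos_aux(2)[OF nu]] by (simp add: w_def inverse_eq_divide)
    ultimately show ?case by simp
  qed
qed



lemma ell_eq: "ell C1 C2 = (\<lambda>z. of_real C1 * inverse ((z - of_real rho)^4)
   + of_real C2 * (inverse ((z - of_real rho)^4) * Ln (1 / (1 - z / of_real rho))))"
  by (auto simp: ell_def divide_inverse fun_eq_iff)

lemma ell_expansion:
  "ell C1 C2 has_fps_expansion
     (fps_const (of_real C1) * Ef (of_real rho) + fps_const (of_real C2) * (Ef (of_real rho) * Lf (of_real rho)))"
proof -
  have lin: "(\<lambda>z. z - of_real rho) has_fps_expansion (fps_X - fps_const (of_real rho))"
    by (intro has_fps_expansion_diff has_fps_expansion_fps_X has_fps_expansion_const)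
  have inv: "(\<lambda>z. inverse ((z - of_real rho)^4)) has_fps_expansion Ef (of_real rho)"
    unfolding Ef_def
    by (rule has_fps_expansion_inverse[OF has_fps_expansion_power_aux[OF lin]])
       (use rho_pos in \<open>simp add: fps_nth_power_0\<close>)
  show ?thesis unfolding ell_eq
    by (intro has_fps_expansion_add has_fps_expansion_cmult_left has_fps_expansion_mult inv L_expansion)
qed

lemma ell_holo: "ell C1 C2 holomorphic_on ball 0 rho"
proof -
  have "(\<lambda>z. of_real C1 / (z - of_real rho) ^ 4
     + of_real C2 / (z - of_real rho) ^ 4 * Ln (1 / (1 - z / of_real rho))) holomorphic_on ball 0 rho"
  proof (intro holomorphic_intros)
    fix z :: complex assume z: "z \<in> ball 0 rho"
    then have nz: "norm z < rho" by simp
    show "(z - of_real rho) ^ 4 \<noteq> 0" "(z - of_real rho) ^ 4 \<noteq> 0"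
      using nz by (auto simp: norm_of_real) 
    show "1 - z / of_real rho \<noteq> 0" using Re_pos_aux[OF nz] by auto
    show "complex_of_real rho \<noteq> 0" using rho_pos by simp
    show "1 / (1 - z / complex_of_real rho) \<notin> \<real>\<^sub>\<le>\<^sub>0" using not_nonpos_aux(1)[OF nz] .
  qed
  then show ?thesis unfolding ell_def[abs_def] .
qed

lemma coeff_eq:
  assumes "0 < \<delta>" "\<delta> < rho"
  shows "contour_integral (circlepath 0 \<delta>) (\<lambda>z. ell C1 C2 z / z ^ (n + 1)) / (2 * of_real pi * \<i>)
     = of_real (aa n * (C1 + C2 * hh n) / rho^(n+4))"
proof -
  have sub: "cball 0 \<delta> \<subseteq> ball (0::complex) rho" using assms by auto
  have hol: "ell C1 C2 holomorphic_on ball 0 \<delta>"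
    by (rule holomorphic_on_subset[OF ell_holo]) (use sub in auto)
  have cont: "continuous_on (cball 0 \<delta>) (ell C1 C2)"
    by (rule continuous_on_subset[OF holomorphic_on_imp_continuous_on[OF ell_holo] sub])
  have "((\<lambda>u. ell C1 C2 u / (u - 0) ^ Suc n) has_contour_integral
          ((2 * pi * \<i>) / fact n * (deriv ^^ n) (ell C1 C2) 0)) (circlepath 0 \<delta>)"
    by (rule Cauchy_has_contour_integral_higher_derivative_circlepath[OF cont hol]) (use assms in simp)
  then have ci: "contour_integral (circlepath 0 \<delta>) (\<lambda>z. ell C1 C2 z / z ^ (n + 1))
      = (2 * pi * \<i>) / fact n * (deriv ^^ n) (ell C1 C2) 0"
    using contour_integral_unique by simp
  have "(deriv ^^ n) (ell C1 C2) 0 / fact n =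
     (fps_const (of_real C1) * Ef (of_real rho) + fps_const (of_real C2) * (Ef (of_real rho) * Lf (of_real rho))) $ n"
    using fps_nth_fps_expansion[OF ell_expansion] by simp
  also have "\<dots> = of_real C1 * (of_real (aa n) / of_real rho ^ (n+4)) + of_real C2 * (of_real (aa n * hh n) / of_real rho^(n+4))"
    using rho_pos by (simp add: E_nth G_nth)
  also have "\<dots> = of_real (aa n * (C1 + C2 * hh n) / rho^(n+4))"
    using rho_pos by (simp add: field_simps)
  finally have d: "(deriv ^^ n) (ell C1 C2) 0 / fact n = of_real (aa n * (C1 + C2 * hh n) / rho^(n+4))" .
  show ?thesis unfolding ci using d[symmetric] by (simp add: field_simps)
qed



lemma ln2_bounds: "693147/10^6 \<le> ln (2::real)" "ln (2::real) \<le> 693148/10^6"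
proof -
  have "ln (2::real) \<in> {(\<Sum>k<6. 2*(1/3)^(2*k+1) / of_nat (2*k+1))..(\<Sum>k<6. 2*(1/3)^(2*k+1) / of_nat (2*k+1)) + 2*((1/3)^(2*6+1) / (1 - (1/3)^2) / of_nat (2*6+1))}"
    using ln_approx_bounds[of 2 6] by simp
  then show "693147/10^6 \<le> ln (2::real)" "ln (2::real) \<le> 693148/10^6"
    by (simp_all add: eval_nat_numeral)
qed

lemma gamma_lower: "euler_mascheroni \<ge> (57713/10^5 :: real)"
proof -
  have "euler_mascheroni \<ge> harm (Suc 30) - ln (real_of_nat (30 + 2)) + 1/real_of_nat (2 * (30 + 2))"
    by (rule euler_mascheroni_lower)
  moreover have "ln (real_of_nat (30 + 2)) = 5 * ln 2"
  proof -
    have e: "ln ((2::real)^5) = real 5 * ln 2" by (rule ln_realpow) 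
    then show ?thesis by simp
  qed
  moreover have "harm (Suc 30) = (\<Sum>k=1..31. inverse (real k))"
    by (simp add: harm_def)
  moreover have "(\<Sum>k=1..31. inverse (real k)) \<ge> 5 * (693148/10^6) - 1/64 + 57713/10^5"
    by (simp add: eval_nat_numeral)
  ultimately show ?thesis using ln2_bounds by simp
qed

lemma harm_lower:
  assumes "n \<ge> 1"
  shows "harm (n+3) \<ge> ln (real n) + euler_mascheroni"
proof -
  have e3: "Suc (n+2) = n+3" by simp
  have u0: "euler_mascheroni \<le> harm (Suc (n+2)) - ln (real_of_nat (n+2 + 2)) + 1/real_of_nat (2 * (n+2 + 1))"
    by (rule euler_mascheroni_upper)
  have c1: "real_of_nat (n+2+2) = real n + 4" "real_of_nat (2*(n+2+1)) = 2 * (real n + 3)"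
    by simp_all
  have u: "euler_mascheroni \<le> harm (n+3) - ln (real n + 4) + 1/(2 * (real n + 3))"
    using u0 unfolding e3 c1 .
  have pos: "real n > 0" using assms by simp
  have "ln (real n / (real n + 4)) \<le> real n / (real n + 4) - 1"
    by (rule ln_le_minus_one) (use pos in simp)
  also have "\<dots> = - 4 / (real n + 4)" by (simp add: field_simps)
  finally have "ln (real n) - ln (real n + 4) \<le> - 4 / (real n + 4)"
    using pos by (simp add: ln_div)
  moreover have "4 / (real n + 4) \<ge> 1 / (2 * (real n + 3))"
    using pos by (simp add: field_simps)
  ultimately have "ln (real n) \<le> ln (real n + 4) - 1 / (2 * (real n + 3))" by linarith
  then show ?thesis using u by linarith
qed

lemma sqrt2_lower: "sqrt 2 \<ge> (141421356/10^8 :: real)"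
  by (rule real_le_rsqrt) (simp add: power2_eq_square)

lemma inv_rho4: "1 / rho^4 = 577 + 408 * sqrt 2"
proof -
  have s: "sqrt 2 * sqrt 2 = (2::real)" by simp
  have r: "rho * (3 + 2 * sqrt 2) = 1" unfolding rho_def by (simp add: algebra_simps s)
  then have "1 / rho = 3 + 2 * sqrt 2" using rho_pos by (simp add: field_simps)
  then have "1 / rho^4 = (3 + 2 * sqrt 2)^4" by (simp add: power_one_over[symmetric])
  also have "\<dots> = 577 + 408 * sqrt 2"
    by (simp add: eval_nat_numeral algebra_simps s)
  finally show ?thesis .
qed


lemma abs_ineq:
  fixes x L K c1 c2 u :: real
  assumes x: "x \<ge> 0" and pos: "c1 \<ge> 0" "c2 \<ge> 0" "K \<ge> 0" "L \<ge> 0"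
    and cases: "(K*c2 - 807/100) * L - (137/100 - K*c1) \<ge> 0 \<or>
                (L \<ge> u * x \<and> 6*K*c2*u - (137/100 - K*c1) \<ge> 0 \<and> K*c2 - 807/100 \<ge> 0)"
  shows "K * (x^3 + 6*x^2) * (c1 + c2 * L) \<ge> x^3 * (807/100 * L + 137/100)"
proof -
  define A where "A = K*c2 - 807/100"
  define D where "D = 137/100 - K*c1"
  have eq: "K * (x^3 + 6*x^2) * (c1 + c2 * L) - x^3 * (807/100 * L + 137/100)
      = x^3 * (A * L - D) + x^2 * (6*K*c1) + x^2 * (6*K*c2*L)"
    unfolding A_def D_def by (simp add: algebra_simps)
  have t2: "x^2 * (6*K*c1) \<ge> 0" using pos by simp
  have t3: "x^2 * (6*K*c2*L) \<ge> 0" using pos by simp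
  from cases show ?thesis
  proof
    assume h: "(K*c2 - 807/100) * L - (137/100 - K*c1) \<ge> 0"
    have "x^3 * (A * L - D) \<ge> 0" using h x unfolding A_def D_def by simp
    then show ?thesis using eq t2 t3 by linarith
  next
    assume h: "L \<ge> u * x \<and> 6*K*c2*u - (137/100 - K*c1) \<ge> 0 \<and> K*c2 - 807/100 \<ge> 0"
    have "x^2 * (6*K*c2*L) \<ge> x^2 * (6*K*c2*(u*x))"
      using h pos by (intro mult_left_mono) (auto intro!: mult_left_mono)
    also have "x^2 * (6*K*c2*(u*x)) = x^3 * (6*K*c2*u)" by (simp add: power2_eq_square power3_eq_cube)
    finally have a: "x^2 * (6*K*c2*L) \<ge> x^3 * (6*K*c2*u)" .
    have b: "x^3 * (A * L) \<ge> 0" using h x pos unfolding A_def by simp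
    have c: "x^3 * (6*K*c2*u - D) \<ge> 0" using h x unfolding D_def by simp
    have "x^3 * (A * L - D) + x^2 * (6*K*c2*L) \<ge> x^3 * (A*L) + x^3 * (6*K*c2*u - D)"
      using a by (simp add: algebra_simps)
    then show ?thesis using eq t2 b c by linarith
  qed
qed


lemma hh_nonneg: "hh n \<ge> 0"
proof -
  have "harm 3 \<le> (harm (n+3) :: real)" by (rule harm_mono) simp
  moreover have "harm 3 = (11/6 :: real)" by (simp add: harm_expand)
  ultimately show ?thesis unfolding hh_def by simp
qed

lemma main_ineq:
  assumes n: "n \<ge> 1"
    and C1: "0.0598 - 479 / 10000000 \<le> C1" and C2: "0.0420 - 314 / 10000000 \<le> C2"
  shows "(577 + 408 * sqrt 2) * aa n * (C1 + C2 * hh n) \<ge> real n ^ 3 * (8.07 * ln (real n) + 1.37)"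
proof -
  define x where "x = real n"
  define L where "L = ln x"
  have x1: "x \<ge> 1" using n by (simp add: x_def)
  have hh0: "hh n \<ge> 0" by (rule hh_nonneg)
  have C2p: "C2 \<ge> 0" using C2 by simp
  have R4: "577 + 408 * sqrt 2 \<ge> 577 + 408 * (141421356/10^8 :: real)" using sqrt2_lower by simp
  have aa_eq: "aa n = (x^3 + 6*x^2 + 11*x + 6) / 6"
    by (simp add: aa_def x_def algebra_simps power2_eq_square power3_eq_cube)
  show ?thesis
  proof (cases "n \<le> 3")
    case True
    have lnle: "ln x \<le> x - 1" using x1 by (intro ln_le_minus_one) simp
    have "C2 * hh n \<ge> 0" using C2p hh0 by simp
    then have E: "C1 + C2 * hh n \<ge> 0.0598 - 479 / 10000000" using C1 by linarith
    have "(577 + 408 * sqrt 2) * aa n * (C1 + C2 * hh n)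
        \<ge> (577 + 408 * (141421356/10^8)) * aa n * (0.0598 - 479 / 10000000)"
      using R4 E by (intro mult_mono) (auto simp: aa_def)
    moreover have "(577 + 408 * (141421356/10^8)) * aa n * (0.0598 - 479 / 10000000)
        \<ge> x ^ 3 * (8.07 * (x - 1) + 1.37)"
      using True n unfolding aa_def x_def
      by (auto simp: le_Suc_eq numeral_3_eq_3 numeral_2_eq_2 elim!: le_SucE)
    moreover have "x ^ 3 * (8.07 * (x - 1) + 1.37) \<ge> x ^ 3 * (8.07 * ln x + 1.37)"
      using lnle x1 by (intro mult_left_mono) auto
    ultimately show ?thesis unfolding x_def by linarith
  next
    case False
    then have x4: "x \<ge> 4" by (simp add: x_def)
    have ln4: "ln (4::real) = 2 * ln 2"
    proof -
      have "ln ((2::real)^2) = real 2 * ln 2" by (rule ln_realpow)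
      then show ?thesis by simp
    qed
    have L4: "L \<ge> 2 * (693147/10^6)"
      using ln2_bounds(1) ln4 x4 unfolding L_def
      by (metis (no_types, opaque_lifting) ln_le_cancel_iff order.trans dual_order.trans
          mult_le_cancel_left_pos zero_less_numeral  less_le_trans zero_less_one)
    have hhL: "hh n \<ge> L + 57713/10^5 - 11/6"
      using harm_lower[OF n] gamma_lower unfolding hh_def L_def x_def by linarith
    define c1 :: real where "c1 = (0.0598 - 479 / 10000000) + (0.0420 - 314 / 10000000) * (57713/10^5 - 11/6)"
    define c2 :: real where "c2 = 0.0420 - 314 / 10000000"
    define K :: real where "K = (577 + 408 * (141421356/10^8)) / 6"
    have v0: "L + 57713/10^5 - 11/6 \<ge> 0" using L4 by simp
    have E: "C1 + C2 * hh n \<ge> c1 + c2 * L"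
    proof -
      have "C2 * hh n \<ge> c2 * hh n" using C2 hh0 unfolding c2_def by (intro mult_right_mono) auto
      moreover have "c2 * hh n \<ge> c2 * (L + 57713/10^5 - 11/6)"
        using hhL unfolding c2_def by (intro mult_left_mono) auto
      ultimately show ?thesis using C1 unfolding c1_def c2_def by (simp add: algebra_simps)
    qed
    have Em: "c1 + c2 * L \<ge> 0" using v0 unfolding c1_def c2_def by simp
    have aa_ge: "aa n \<ge> (x^3 + 6*x^2) / 6" using aa_eq x1 by simp
    have "(577 + 408 * sqrt 2) * aa n * (C1 + C2 * hh n)
        \<ge> (577 + 408 * (141421356/10^8)) * ((x^3 + 6*x^2) / 6) * (c1 + c2 * L)"
    proof (rule mult_mono)
      have aa0: "aa n \<ge> 0" by (simp add: aa_def)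
      show "0 \<le> (577 + 408 * sqrt 2) * aa n" using aa0 by simp
      show "(577 + 408 * (141421356/10^8)) * ((x^3 + 6*x^2) / 6) \<le> (577 + 408 * sqrt 2) * aa n"
        using R4 aa_ge x1 by (intro mult_mono) auto
    qed (use E Em in auto)
    also have "(577 + 408 * (141421356/10^8)) * ((x^3 + 6*x^2) / 6) * (c1 + c2 * L)
        = K * (x^3 + 6*x^2) * (c1 + c2 * L)" unfolding K_def by simp
    also have "K * (x^3 + 6*x^2) * (c1 + c2 * L) \<ge> x^3 * (807/100 * L + 137/100)"
    proof (rule abs_ineq[where u = "14 * (693147/10^6) / 16384"])
      show "x \<ge> 0" "c1 \<ge> 0" "c2 \<ge> 0" "K \<ge> 0" "L \<ge> 0"
        using x1 L4 unfolding c1_def c2_def K_def by simp_all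
      show "(K*c2 - 807/100) * L - (137/100 - K*c1) \<ge> 0 \<or>
          (L \<ge> 14 * (693147/10^6) / 16384 * x \<and> 6*K*c2*(14 * (693147/10^6) / 16384) - (137/100 - K*c1) \<ge> 0
           \<and> K*c2 - 807/100 \<ge> 0)"
      proof (cases "x \<ge> 16384")
        case True
        have ln14: "ln (16384::real) = 14 * ln 2"
        proof -
          have "ln ((2::real)^14) = real 14 * ln 2" by (rule ln_realpow)
          then show ?thesis by simp
        qed
        have "L \<ge> ln 16384" unfolding L_def using True by simp
        then have "L \<ge> 14 * (693147/10^6)" using ln14 ln2_bounds(1) by linarith
        then show ?thesis unfolding K_def c1_def c2_def by simp
      next
        case False
        have ln14: "ln (16384::real) = 14 * ln 2"
        proof -
          have "ln ((2::real)^14) = real 14 * ln 2" by (rule ln_realpow)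
          then show ?thesis by simp
        qed
        have e: "exp 1 \<le> x" using exp_le x4 by linarith
        have "ln 16384 / 16384 \<le> ln x / x" by (rule ln_x_over_x_mono[OF e]) (use False in simp)
        then have "ln 16384 / 16384 * x \<le> L" using x1 unfolding L_def by (simp add: field_simps)
        moreover have "14 * (693147/10^6) / 16384 * x \<le> ln 16384 / 16384 * x"
          using ln14 ln2_bounds(1) x1 by (intro mult_right_mono) auto
        ultimately have "L \<ge> 14 * (693147/10^6) / 16384 * x" by linarith
        then show ?thesis unfolding K_def c1_def c2_def by simp
      qed
    qed
    finally show ?thesis unfolding x_def L_def by simp
  qed
qed



theorem proposition3p2:
  fixes d :: "nat \<Rightarrow> real" and F h0 h1 h2 :: "complex \<Rightarrow> complex"
    and C1 C2 \<delta> :: real and n :: nat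
  assumes d_init: "d 0 = 72" "d 1 = 1932" "d 2 = 31248" "d 3 = 790101 / 2"
      "d 4 = 17208645 / 4" "d 5 = 338898609 / 8" "d 6 = 1551478257 / 4"
    and d_rec: "\<And>m. (\<Sum>k\<le>7. rcoef k m * d (m + k)) = 0"
    and F_hol: "F holomorphic_on Delta"
    and F_series: "\<And>z. norm z < rho \<Longrightarrow> (\<lambda>m. of_real (d m) * z ^ m) sums F z"
    and h_hol: "h0 holomorphic_on ball (of_real rho) rho"
      "h1 holomorphic_on ball (of_real rho) rho"
      "h2 holomorphic_on ball (of_real rho) rho"
    and decomp: "\<And>z. z \<in> Delta \<inter> ball (of_real rho) rho \<Longrightarrow>
        F z = ell C1 C2 z + (h0 z + h1 z * Ln (1 / (1 - z / of_real rho))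
              + h2 z * (Ln (1 / (1 - z / of_real rho))) ^ 2) / (z - of_real rho) ^ 3"
    and C1_bd: "0.0598 - 479 / 10000000 \<le> C1" "C1 \<le> 0.0598 + 479 / 10000000"
    and C2_bd: "0.0420 - 314 / 10000000 \<le> C2" "C2 \<le> 0.0420 + 314 / 10000000"
    and \<delta>: "0 < \<delta>" "\<delta> < rho"
  shows "Im (contour_integral (circlepath 0 \<delta>) (\<lambda>z. ell C1 C2 z / z ^ (n + 1)) / (2 * of_real pi * \<i>)) = 0
       \<and> Re (contour_integral (circlepath 0 \<delta>) (\<lambda>z. ell C1 C2 z / z ^ (n + 1)) / (2 * of_real pi * \<i>))
         \<ge> (if n = 0 then 0 else rho powr (- real n) * real n ^ 3 * (8.07 * ln (real n) + 1.37))"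
  proof -
  define X where "X = aa n * (C1 + C2 * hh n) / rho^(n+4)"
  have ce: "contour_integral (circlepath 0 \<delta>) (\<lambda>z. ell C1 C2 z / z ^ (n + 1)) / (2 * of_real pi * \<i>) = of_real X"
    unfolding X_def by (rule coeff_eq[OF \<delta>])
  have C2p: "C2 \<ge> 0" using C2_bd by simp
  have C1p: "C1 \<ge> 0" using C1_bd by simp
  have E0: "C1 + C2 * hh n \<ge> 0" using C1p C2p hh_nonneg[of n] by simp
  have aa0: "aa n \<ge> 0" by (simp add: aa_def)
  have rp: "rho > 0" by (rule rho_pos)
  have "X \<ge> (if n = 0 then 0 else rho powr (- real n) * real n ^ 3 * (8.07 * ln (real n) + 1.37))"
  proof (cases "n = 0")
    case True
    then show ?thesis unfolding X_def using E0 aa0 rp by simp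
  next
    case False
    then have n1: "n \<ge> 1" by simp
    have pw: "rho powr (- real n) = 1 / rho^n" using rp by (simp add: powr_minus powr_realpow divide_inverse)
    have "X = (1 / rho^n) * ((1 / rho^4) * aa n * (C1 + C2 * hh n))"
      unfolding X_def using rp by (simp add: field_simps power_add)
    also have "\<dots> = (1 / rho^n) * ((577 + 408 * sqrt 2) * aa n * (C1 + C2 * hh n))"
      unfolding inv_rho4 ..
    also have "\<dots> \<ge> (1 / rho^n) * (real n ^ 3 * (8.07 * ln (real n) + 1.37))"
      using main_ineq[OF n1 C1_bd(1) C2_bd(1)] rp by (intro mult_left_mono) auto
    finally show ?thesis using False pw by (simp add: mult.assoc)
  qed
  then show ?thesis unfolding ce by simp
qed

end
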